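(* Let $N\ge2$ and $0=x_0<x_1<\dots<x_N=1$, $I=[0,1]$, $I_i=[x_{i-1},x_i]$, $|I_i|=x_i-x_{i-1}$, $L_i(x)=x_{i-1}+|I_i|x$ for $i=1,\dots,N$. Let $\alpha_i,\beta_i,\gamma_i$ be reals with $|\alpha_i|<1$ and $|\beta_i|+|\gamma_i|<1$, let $p_i\in\mathrm{Lip}\,\lambda_i$ and $q_i\in\mathrm{Lip}\,\mu_i$ with $0<\lambda_i,\mu_i\le1$, and let $f_1,f_2:I\to\mathbb{R}$ be continuous with $f_1(L_i(x))=\alpha_if_1(x)+\beta_if_2(x)+p_i(x)$ and $f_2(L_i(x))=\gamma_if_2(x)+q_i(x)$ for all $x\in I$, $i=1,\dots,N$. Put $\lambda=\min_i\lambda_i$, $\mu=\min_i\mu_i$, $\Omega=\max_i |\alpha_i|/|I_i|^{\lambda}$, $\Gamma=\max_i|\gamma_i|/|I_i|^{\mu}$, $\Theta=\max_i|\alpha_i|/|I_i|^{\mu}$, and suppose $\Theta>1$. Then: (a) if $\Omega\ne1$ and $\Gamma\ne1$, there is $\delta\in(0,1]$ with $f_1\in\mathrm{Lip}\,\delta$; (b) if $\Omega=1$ or $\Gamma=1$, there is $\delta\in(0,1]$ with $\omega(f_1,t)=O(|t|^{\delta}\log|t|)$ as $t\to0$.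
   Context: $\mathrm{Lip}\,\delta$ denotes the class of functions $g$ on $I$ such that $|g(x)-g(y)|\le C|x-y|^{\delta}$ for some constant $C$ and all $x,y\in I$. $\omega(f_1,t)=\sup\{|f_1(x)-f_1(y)|: x,y\in I,\ |x-y|\le |t|\}$ is the modulus of continuity. The function $f_1$ is the coalescence hidden variable fractal interpolation function (CHFIF): $(f_1,f_2)$ is the continuous function whose graph is the attractor of the IFS $\omega_i(x,y,z)=(L_i(x),\alpha_iy+\beta_iz+p_i(x),\gamma_iz+q_i(x))$. *)

theory Defs
  imports "HOL-Analysis.Analysis" "HOL-Library.Landau_Symbols"
begin

definition Lip_on :: "real set \<Rightarrow> real \<Rightarrow> (real \<Rightarrow> real) \<Rightarrow> bool" where
  "Lip_on I \<delta> g \<longleftrightarrow> (\<exists>C. \<forall>x\<in>I. \<forall>y\<in>I. \<bar>g x - g y\<bar> \<le> C * \<bar>x - y\<bar> powr \<delta>)"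

definition modulus :: "real set \<Rightarrow> (real \<Rightarrow> real) \<Rightarrow> real \<Rightarrow> real" where
  "modulus I f t = Sup {\<bar>f x - f y\<bar> | x y. x \<in> I \<and> y \<in> I \<and> \<bar>x - y\<bar> \<le> \<bar>t\<bar>}"

end

theory Submission
  imports Defs
begin

lemma Lip_on_lower:
  assumes "Lip_on {0..1} d g" "0 < e" "e \<le> d"
  shows "\<exists>C\<ge>0. \<forall>u\<in>{0..1}. \<forall>v\<in>{0..1}. \<bar>g u - g v\<bar> \<le> C * \<bar>u - v\<bar> powr e"
proof -
  obtain C where C: "\<forall>u\<in>{0..1}. \<forall>v\<in>{0..1}. \<bar>g u - g v\<bar> \<le> C * \<bar>u - v\<bar> powr d"
    using assms(1) unfolding Lip_on_def by blast
  show ?thesis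
  proof (intro exI[of _ "max C 0"] conjI ballI)
    fix u v :: real assume u: "u \<in> {0..1}" and v: "v \<in> {0..1}"
    have h1: "\<bar>u - v\<bar> \<le> 1" using u v by auto
    have "\<bar>u - v\<bar> powr d \<le> \<bar>u - v\<bar> powr e"
    proof (cases "u = v")
      case True then show ?thesis by simp
    next
      case False
      then have "0 < \<bar>u - v\<bar>" by simp
      then show ?thesis using powr_mono' h1 assms(2,3)
        by (metis abs_ge_zero order_less_le)
    qed
    then have "C * \<bar>u - v\<bar> powr d \<le> max C 0 * \<bar>u - v\<bar> powr e"
      by (meson max.cobounded1 max.cobounded2 mult_right_mono order_trans powr_ge_zero mult_left_mono)
    then show "\<bar>g u - g v\<bar> \<le> max C 0 * \<bar>u - v\<bar> powr e" using C u v by fastforce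
  qed simp
qed

lemma Lip_uniform:
  fixes S :: "real set" and e :: real and r :: "'i \<Rightarrow> real \<Rightarrow> real"
  assumes "finite A" "\<forall>i\<in>A. \<exists>C\<ge>0. \<forall>u\<in>S. \<forall>v\<in>S. \<bar>r i u - r i v\<bar> \<le> C * \<bar>u - v\<bar> powr e"
  shows "\<exists>K\<ge>0. \<forall>i\<in>A. \<forall>u\<in>S. \<forall>v\<in>S. \<bar>r i u - r i v\<bar> \<le> K * \<bar>u - v\<bar> powr e"
proof -
  obtain C where C: "\<forall>i\<in>A. C i \<ge> 0 \<and> (\<forall>u\<in>S. \<forall>v\<in>S. \<bar>r i u - r i v\<bar> \<le> C i * \<bar>u - v\<bar> powr e)"
    using assms(2) by metis
  show ?thesis
  proof (intro exI[of _ "sum C A"] conjI ballI)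
    show "0 \<le> sum C A" using C by (auto intro!: sum_nonneg)
    fix i u v assume i: "i \<in> A" and u: "u \<in> S" and v: "v \<in> S"
    have "C i \<le> sum C A" using C i assms(1) by (intro member_le_sum) auto
    then have "C i * \<bar>u - v\<bar> powr e \<le> sum C A * \<bar>u - v\<bar> powr e" by (simp add: mult_right_mono)
    then show "\<bar>r i u - r i v\<bar> \<le> sum C A * \<bar>u - v\<bar> powr e" using C i u v by fastforce
  qed
qed

lemma powr_pow_swap:
  fixes c e :: real assumes "0 \<le> c" shows "(c ^ n) powr e = (c powr e) ^ n"
  using assms by (induction n) (auto simp: powr_mult)

lemma self_affine_holder:
  fixes N :: nat and x a :: "nat \<Rightarrow> real" and r :: "nat \<Rightarrow> real \<Rightarrow> real"
    and g :: "real \<Rightarrow> real" and e K :: real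
  assumes N1: "N \<ge> 1" and x0: "x 0 = 0" and xN: "x N = 1"
    and xinc: "\<forall>i<N. x i < x (Suc i)"
    and a: "\<forall>i\<in>{1..N}. \<bar>a i\<bar> < 1"
    and e: "0 < e"
    and rH: "\<forall>i\<in>{1..N}. \<forall>u\<in>{0..1}. \<forall>v\<in>{0..1}. \<bar>r i u - r i v\<bar> \<le> K * \<bar>u - v\<bar> powr e"
    and K: "0 \<le> K"
    and gc: "continuous_on {0..1} g"
    and eq: "\<forall>i\<in>{1..N}. \<forall>t\<in>{0..1}. g (x (i - 1) + (x i - x (i - 1)) * t) = a i * g t + r i t"
  shows "\<exists>\<delta>. 0 < \<delta> \<and> \<delta> \<le> 1 \<and> Lip_on {0..1} \<delta> g"
proof -
  have xmono: "x i \<le> x j" if "i \<le> j" "j \<le> N" for i j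
    using that
  proof (induction j)
    case 0 then show ?case by simp
  next
    case (Suc j)
    show ?case
    proof (cases "i = Suc j")
      case True then show ?thesis by simp
    next
      case False
      then have "i \<le> j" using Suc.prems by simp
      then have "x i \<le> x j" using Suc by simp
      also have "x j < x (Suc j)" using xinc Suc.prems by simp
      finally show ?thesis by simp
    qed
  qed
  define l where "l i = x i - x (i - 1)" for i
  have lpos: "0 < l i" if "i \<in> {1..N}" for i
  proof -
    have "i - 1 < N" "Suc (i - 1) = i" using that by auto
    then show ?thesis using xinc l_def by force
  qed
  define amax where "amax = Max ((\<lambda>i. \<bar>a i\<bar>) ` {1..N})"
  have ne: "{1..N} \<noteq> {}" using N1 by simp
  have amax_ge: "\<bar>a i\<bar> \<le> amax" if "i \<in> {1..N}" for i
    unfolding amax_def using that by simp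
  have amax_lt: "amax < 1" unfolding amax_def using a ne by simp
  have amax_nn: "0 \<le> amax" using amax_ge[of N] N1 by simp
  define c where "c = min (1/2) (Min (l ` {1..N}))"
  have c_pos: "0 < c" unfolding c_def using lpos ne by simp
  have c_le: "c \<le> l i" if "i \<in> {1..N}" for i
    unfolding c_def using that by (simp add: min.coboundedI2)
  have c_lt1: "c < 1" unfolding c_def by simp
  have cpe: "c powr e < 1" using powr_less_mono2[OF e, of c 1] c_pos c_lt1 by simp
  define \<theta> where "\<theta> = (1 + max amax (c powr e)) / 2"
  have th1: "amax < \<theta>" "c powr e \<le> \<theta>" "\<theta> < 1" "0 < \<theta>"
    unfolding \<theta>_def using amax_lt cpe amax_nn by auto
  obtain M where M: "\<forall>t\<in>{0..1}. \<bar>g t\<bar> \<le> M"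
    using compact_imp_bounded[OF compact_continuous_image[OF gc compact_Icc]]
    unfolding bounded_real by auto
  define B where "B = max (2*M) (K / (\<theta> - amax))"
  have B1: "2 * M \<le> B" unfolding B_def by simp
  have B2: "K \<le> B * (\<theta> - amax)"
  proof -
    have "K / (\<theta> - amax) \<le> B" unfolding B_def by simp
    then show ?thesis using th1 by (simp add: divide_le_eq)
  qed
  have B0: "0 \<le> B" using B1 M[rule_format, of 0] by simp
  have step: "\<bar>g (x (i - 1) + l i * u) - g (x (i - 1) + l i * v)\<bar> \<le> amax * D + K * \<theta> ^ n"
    if i: "i \<in> {1..N}" and uv: "u \<in> {0..1}" "v \<in> {0..1}" "\<bar>u - v\<bar> \<le> c ^ n"
      and D: "\<bar>g u - g v\<bar> \<le> D" for i u v n D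
  proof -
    have "g (x (i - 1) + l i * u) - g (x (i - 1) + l i * v) = a i * (g u - g v) + (r i u - r i v)"
      using eq i uv unfolding l_def by (simp add: algebra_simps)
    then have 1: "\<bar>g (x (i - 1) + l i * u) - g (x (i - 1) + l i * v)\<bar> \<le> \<bar>a i\<bar> * \<bar>g u - g v\<bar> + \<bar>r i u - r i v\<bar>"
      using abs_triangle_ineq[of "a i * (g u - g v)" "r i u - r i v"] by (simp add: abs_mult)
    have 2: "\<bar>a i\<bar> * \<bar>g u - g v\<bar> \<le> amax * D"
      using amax_ge[OF i] D amax_nn by (meson abs_ge_zero mult_mono)
    have "\<bar>u - v\<bar> powr e \<le> (c ^ n) powr e" using powr_mono2 e uv(3) by simp
    also have "\<dots> = (c powr e) ^ n" using c_pos by (simp add: powr_pow_swap)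
    also have "\<dots> \<le> \<theta> ^ n" using th1 by (simp add: power_mono)
    finally have "K * \<bar>u - v\<bar> powr e \<le> K * \<theta> ^ n" using K by (simp add: mult_left_mono)
    then have 3: "\<bar>r i u - r i v\<bar> \<le> K * \<theta> ^ n" using rH i uv by fastforce
    show ?thesis using 1 2 3 by linarith
  qed
  have unscale: "\<exists>u\<in>{0..1}. t = x (i - 1) + l i * u" if i: "i \<in> {1..N}" "x (i - 1) \<le> t" "t \<le> x i" for i t
  proof
    show "(t - x (i - 1)) / l i \<in> {0..1}" using lpos[OF i(1)] i by (auto simp: l_def divide_simps)
    show "t = x (i - 1) + l i * ((t - x (i - 1)) / l i)" using lpos[OF i(1)] by simp
  qed
  have locate: "\<exists>i\<in>{1..N}. x (i - 1) \<le> t \<and> t \<le> x i" if t: "t \<in> {0..1}" for t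
  proof -
    define k where "k = (LEAST k. t \<le> x k)"
    have tk: "t \<le> x k" unfolding k_def by (rule LeastI[of _ N]) (use t xN in simp)
    have kN: "k \<le> N" unfolding k_def by (rule Least_le) (use t xN in simp)
    show ?thesis
    proof (cases "k = 0")
      case True
      then have "t = 0" using tk t x0 by simp
      moreover have "x 0 \<le> x 1" using xmono N1 by simp
      ultimately show ?thesis using N1 x0 by (intro bexI[of _ 1]) auto
    next
      case False
      then have "k - 1 < k" by simp
      then have "\<not> t \<le> x (k - 1)" using not_less_Least[of "k - 1" "\<lambda>k. t \<le> x k"] unfolding k_def by blast
      then show ?thesis using False kN tk by (intro bexI[of _ k]) auto
    qed
  qed
  have main: "(\<forall>t\<in>{0..1}. \<bar>t - 1\<bar> \<le> c ^ n \<longrightarrow> \<bar>g t - g 1\<bar> \<le> B * \<theta> ^ n) \<and>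
      (\<forall>t\<in>{0..1}. \<bar>t\<bar> \<le> c ^ n \<longrightarrow> \<bar>g t - g 0\<bar> \<le> B * \<theta> ^ n) \<and>
      (\<forall>s\<in>{0..1}. \<forall>t\<in>{0..1}. \<bar>s - t\<bar> \<le> c ^ n \<longrightarrow> \<bar>g s - g t\<bar> \<le> 2 * B * \<theta> ^ n)" for n
  proof (induction n)
    case 0
    have H: "\<bar>g s - g t\<bar> \<le> B" if "s \<in> {0..1}" "t \<in> {0..1}" for s t
    proof -
      have "\<bar>g s\<bar> \<le> M" "\<bar>g t\<bar> \<le> M" using M that by auto
      then show ?thesis using B1 by arith
    qed
    show ?case
    proof (intro conjI ballI impI)
      fix t :: real assume "t \<in> {0..1}"
      then show "\<bar>g t - g 1\<bar> \<le> B * \<theta> ^ 0" "\<bar>g t - g 0\<bar> \<le> B * \<theta> ^ 0" using H[of t 1] H[of t 0] by auto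
    next
      fix s t :: real assume "s \<in> {0..1}" "t \<in> {0..1}"
      then show "\<bar>g s - g t\<bar> \<le> 2 * B * \<theta> ^ 0" using H[of s t] B0 by simp
    qed
  next
    case (Suc n)
    have Q1: "\<forall>t\<in>{0..1}. \<bar>t - 1\<bar> \<le> c ^ n \<longrightarrow> \<bar>g t - g 1\<bar> \<le> B * \<theta> ^ n"
      and Q0: "\<forall>t\<in>{0..1}. \<bar>t\<bar> \<le> c ^ n \<longrightarrow> \<bar>g t - g 0\<bar> \<le> B * \<theta> ^ n"
      and P: "\<forall>s\<in>{0..1}. \<forall>t\<in>{0..1}. \<bar>s - t\<bar> \<le> c ^ n \<longrightarrow> \<bar>g s - g t\<bar> \<le> 2 * B * \<theta> ^ n"
      using Suc by auto
    have ineq: "amax * (B * \<theta> ^ n) + K * \<theta> ^ n \<le> B * \<theta> ^ Suc n"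
    proof -
      have "K * \<theta> ^ n \<le> B * (\<theta> - amax) * \<theta> ^ n" using B2 th1 by (simp add: mult_right_mono)
      then show ?thesis by (simp add: algebra_simps)
    qed
    have Kt: "0 \<le> K * \<theta> ^ n" using K th1 by simp
    have cS: "c ^ Suc n \<le> l i * c ^ n" if "i \<in> {1..N}" for i
      using c_le[OF that] c_pos by (simp add: mult_right_mono)
    have shrink: "\<bar>u - v\<bar> \<le> c ^ n" if "i \<in> {1..N}" "\<bar>(x (i - 1) + l i * u) - (x (i - 1) + l i * v)\<bar> \<le> c ^ Suc n" for i u v
    proof -
      have e1: "\<bar>(x (i - 1) + l i * u) - (x (i - 1) + l i * v)\<bar> = l i * \<bar>u - v\<bar>"
        using lpos[OF that(1)] by (simp add: abs_mult flip: right_diff_distrib)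
      have "l i * \<bar>u - v\<bar> \<le> l i * c ^ n"
        using e1 that(2) cS[OF that(1)] by linarith
      then show ?thesis using lpos[OF that(1)] by simp
    qed
    have NN: "N \<in> {1..N}" "(1::nat) \<in> {1..N}" using N1 by auto
    have xN1: "x (N - 1) + l N * 1 = 1" using xN l_def by simp
    have x01: "x (1 - 1) + l 1 * 0 = 0" using x0 l_def by simp
    have nQ1: "\<forall>t\<in>{0..1}. \<bar>t - 1\<bar> \<le> c ^ Suc n \<longrightarrow> \<bar>g t - g 1\<bar> \<le> B * \<theta> ^ Suc n"
    proof (intro ballI impI)
      fix t :: real assume t: "t \<in> {0..1}" and h: "\<bar>t - 1\<bar> \<le> c ^ Suc n"
      have "c ^ Suc n \<le> c" using c_pos c_lt1 by (simp add: power_le_one mult_left_le)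
      then have "x (N - 1) \<le> t" using h c_le[OF NN(1)] t xN unfolding l_def by auto
      then obtain u where u: "u \<in> {0..1}" "t = x (N - 1) + l N * u" using unscale[OF NN(1)] t xN by force
      have "\<bar>u - 1\<bar> \<le> c ^ n" using shrink[OF NN(1), of u 1] h u xN1 by simp
      then have "\<bar>g u - g 1\<bar> \<le> B * \<theta> ^ n" using Q1 u by simp
      from step[OF NN(1) u(1) _ \<open>\<bar>u - 1\<bar> \<le> c ^ n\<close> this]
      have "\<bar>g t - g 1\<bar> \<le> amax * (B * \<theta> ^ n) + K * \<theta> ^ n" using u xN1 by simp
      then show "\<bar>g t - g 1\<bar> \<le> B * \<theta> ^ Suc n" using ineq by linarith
    qed
    have nQ0: "\<forall>t\<in>{0..1}. \<bar>t\<bar> \<le> c ^ Suc n \<longrightarrow> \<bar>g t - g 0\<bar> \<le> B * \<theta> ^ Suc n"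
    proof (intro ballI impI)
      fix t :: real assume t: "t \<in> {0..1}" and h: "\<bar>t\<bar> \<le> c ^ Suc n"
      have "c ^ Suc n \<le> c" using c_pos c_lt1 by (simp add: power_le_one mult_left_le)
      then have "t \<le> x 1" using h c_le[OF NN(2)] t x0 unfolding l_def by auto
      then obtain u where u: "u \<in> {0..1}" "t = x (1 - 1) + l 1 * u" using unscale[OF NN(2)] t x0 by force
      have "\<bar>u - 0\<bar> \<le> c ^ n" using shrink[OF NN(2), of u 0] h u x01 by simp
      then have "\<bar>g u - g 0\<bar> \<le> B * \<theta> ^ n" using Q0 u by simp
      from step[OF NN(2) u(1) _ \<open>\<bar>u - 0\<bar> \<le> c ^ n\<close> this]
      have "\<bar>g t - g 0\<bar> \<le> amax * (B * \<theta> ^ n) + K * \<theta> ^ n" using u x01 by simp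
      then show "\<bar>g t - g 0\<bar> \<le> B * \<theta> ^ Suc n" using ineq by linarith
    qed
    have Pord: "\<bar>g s - g t\<bar> \<le> 2 * B * \<theta> ^ Suc n"
      if st: "s \<in> {0..1}" "t \<in> {0..1}" "s \<le> t" "t - s \<le> c ^ Suc n" for s t
    proof -
      obtain i where i: "i \<in> {1..N}" "x (i - 1) \<le> s" "s \<le> x i" using locate[OF st(1)] by blast
      show ?thesis
      proof (cases "t \<le> x i")
        case True
        obtain u where u: "u \<in> {0..1}" "s = x (i - 1) + l i * u" using unscale[OF i] by blast
        obtain v where v: "v \<in> {0..1}" "t = x (i - 1) + l i * v" using unscale[OF i(1) _ True] i st by force
        have uv: "\<bar>u - v\<bar> \<le> c ^ n" using shrink[OF i(1), of u v] u v st by simp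
        then have "\<bar>g u - g v\<bar> \<le> 2 * B * \<theta> ^ n" using P u v by simp
        from step[OF i(1) u(1) v(1) uv this]
        have "\<bar>g s - g t\<bar> \<le> amax * (2 * B * \<theta> ^ n) + K * \<theta> ^ n" using u v by simp
        then show ?thesis using ineq Kt by (simp add: algebra_simps)
      next
        case False
        have iN: "i < N" using False st(2) xN i(1) by (cases "i = N") auto
        define j where "j = Suc i"
        have j: "j \<in> {1..N}" "j - 1 = i" using iN j_def by auto
        have "c ^ Suc n \<le> c" using c_pos c_lt1 by (simp add: power_le_one mult_left_le)
        then have txj: "t \<le> x j" using st i c_le[OF j(1)] j unfolding l_def by auto
        obtain u where u: "u \<in> {0..1}" "s = x (i - 1) + l i * u" using unscale[OF i] by blast
        have xi1: "x i = x (i - 1) + l i * 1" using l_def by simp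
        have sxi: "\<bar>s - x i\<bar> \<le> c ^ Suc n" using st i(3) False by auto
        have u1: "\<bar>u - 1\<bar> \<le> c ^ n" using shrink[OF i(1), of u 1] sxi u(2) xi1 by simp
        then have "\<bar>g u - g 1\<bar> \<le> B * \<theta> ^ n" using Q1 u by simp
        from step[OF i(1) u(1) _ u1 this]
        have A1: "\<bar>g s - g (x i)\<bar> \<le> B * \<theta> ^ Suc n" using u xi1 ineq by simp
        obtain v where v: "v \<in> {0..1}" "t = x (j - 1) + l j * v" using unscale[OF j(1) _ txj] False j by force
        have xi0: "x i = x (j - 1) + l j * 0" using j by simp
        have xit: "\<bar>x i - t\<bar> \<le> c ^ Suc n" using st i(3) False by auto
        have v0: "\<bar>0 - v\<bar> \<le> c ^ n" using shrink[OF j(1), of 0 v] xit v(2) xi0 by simp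
        have "\<bar>g v - g 0\<bar> \<le> B * \<theta> ^ n" using Q0 v(1) v0 by simp
        then have "\<bar>g 0 - g v\<bar> \<le> B * \<theta> ^ n" by (simp add: abs_minus_commute)
        from step[OF j(1) _ v(1) v0 this]
        have A2: "\<bar>g (x i) - g t\<bar> \<le> B * \<theta> ^ Suc n" using v xi0 ineq by simp
        show ?thesis using A1 A2 by linarith
      qed
    qed
    have nP: "\<forall>s\<in>{0..1}. \<forall>t\<in>{0..1}. \<bar>s - t\<bar> \<le> c ^ Suc n \<longrightarrow> \<bar>g s - g t\<bar> \<le> 2 * B * \<theta> ^ Suc n"
    proof (intro ballI impI)
      fix s t :: real assume s: "s \<in> {0..1}" and t: "t \<in> {0..1}" and h: "\<bar>s - t\<bar> \<le> c ^ Suc n"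
      show "\<bar>g s - g t\<bar> \<le> 2 * B * \<theta> ^ Suc n"
      proof (cases "s \<le> t")
        case True then show ?thesis using Pord[OF s t] h by simp
      next
        case False then show ?thesis using Pord[OF t s] h by (simp add: abs_minus_commute)
      qed
    qed
    show ?case using nQ1 nQ0 nP by blast
  qed
  define \<delta> where "\<delta> = min 1 (ln \<theta> / ln c)"
  have lnth: "ln \<theta> < 0" using th1 by simp
  have lnc: "ln c < 0" using c_pos c_lt1 by simp
  have d0: "0 < \<delta>" unfolding \<delta>_def using lnth lnc by (simp add: divide_neg_neg)
  have d1: "\<delta> \<le> 1" unfolding \<delta>_def by simp
  have thc: "\<theta> \<le> c powr \<delta>"
  proof -
    have "\<delta> \<le> ln \<theta> / ln c" unfolding \<delta>_def by simp
    then have "ln \<theta> \<le> \<delta> * ln c" using lnc by (simp add: le_divide_eq)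
    then have "exp (ln \<theta>) \<le> exp (\<delta> * ln c)" by simp
    then show ?thesis using th1 c_pos by (simp add: powr_def)
  qed
  have "Lip_on {0..1} \<delta> g"
    unfolding Lip_on_def
  proof (intro exI[of _ "2 * B / \<theta>"] ballI)
    fix s t :: real assume s: "s \<in> {0..1}" and t: "t \<in> {0..1}"
    show "\<bar>g s - g t\<bar> \<le> 2 * B / \<theta> * \<bar>s - t\<bar> powr \<delta>"
    proof (cases "s = t")
      case True then show ?thesis by simp
    next
      case False
      define h where "h = \<bar>s - t\<bar>"
      have h0: "0 < h" and h1: "h \<le> 1" using False s t unfolding h_def by auto
      obtain m where "c ^ m < h" using real_arch_pow_inv[OF h0 c_lt1] by blast
      define m0 where "m0 = (LEAST m. c ^ m < h)"
      have m0: "c ^ m0 < h" unfolding m0_def by (rule LeastI) fact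
      have m00: "m0 \<noteq> 0"
      proof
        assume "m0 = 0" with m0 h1 show False by simp
      qed
      have "\<not> c ^ (m0 - 1) < h" unfolding m0_def by (rule not_less_Least) (use m00 in \<open>simp add: m0_def\<close>)
      define n where "n = m0 - 1"
      have hn: "h \<le> c ^ n" and hSn: "c ^ Suc n < h"
        using \<open>\<not> c ^ (m0 - 1) < h\<close> m0 m00 unfolding n_def by auto
      have "\<bar>g s - g t\<bar> \<le> 2 * B * \<theta> ^ n" using main[of n] s t hn unfolding h_def by blast
      also have "\<dots> = 2 * B / \<theta> * \<theta> ^ Suc n" using th1 by simp
      also have "\<dots> \<le> 2 * B / \<theta> * (c powr \<delta>) ^ Suc n"
        using th1 B0 thc by (intro mult_left_mono power_mono) auto
      also have "\<dots> = 2 * B / \<theta> * (c ^ Suc n) powr \<delta>"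
        using powr_pow_swap[of c "Suc n" \<delta>] c_pos by (simp only: less_imp_le)
      also have "\<dots> \<le> 2 * B / \<theta> * h powr \<delta>"
        using th1 B0 hSn d0 c_pos by (intro mult_left_mono powr_mono2) auto
      finally show ?thesis unfolding h_def .
    qed
  qed
  then show ?thesis using d0 d1 by blast
qed

theorem theorem3p3:
  fixes N :: nat and x :: "nat \<Rightarrow> real"
    and \<alpha> \<beta> \<gamma> :: "nat \<Rightarrow> real"
    and p q :: "nat \<Rightarrow> real \<Rightarrow> real"
    and lam mu :: "nat \<Rightarrow> real"
    and f1 f2 :: "real \<Rightarrow> real"
  assumes N2: "N \<ge> 2"
    and x0: "x 0 = 0" and xN: "x N = 1"
    and xinc: "\<forall>i<N. x i < x (Suc i)"
    and alpha: "\<forall>i\<in>{1..N}. \<bar>\<alpha> i\<bar> < 1"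
    and betagamma: "\<forall>i\<in>{1..N}. \<bar>\<beta> i\<bar> + \<bar>\<gamma> i\<bar> < 1"
    and lam: "\<forall>i\<in>{1..N}. 0 < lam i \<and> lam i \<le> 1"
    and mu: "\<forall>i\<in>{1..N}. 0 < mu i \<and> mu i \<le> 1"
    and pLip: "\<forall>i\<in>{1..N}. Lip_on {0..1} (lam i) (p i)"
    and qLip: "\<forall>i\<in>{1..N}. Lip_on {0..1} (mu i) (q i)"
    and f1c: "continuous_on {0..1} f1" and f2c: "continuous_on {0..1} f2"
    and eq1: "\<forall>i\<in>{1..N}. \<forall>t\<in>{0..1}.
       f1 (x (i - 1) + (x i - x (i - 1)) * t) = \<alpha> i * f1 t + \<beta> i * f2 t + p i t"
    and eq2: "\<forall>i\<in>{1..N}. \<forall>t\<in>{0..1}.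
       f2 (x (i - 1) + (x i - x (i - 1)) * t) = \<gamma> i * f2 t + q i t"
  defines "lmin \<equiv> Min (lam ` {1..N})" and "mmin \<equiv> Min (mu ` {1..N})"
  defines "\<Omega> \<equiv> Max ((\<lambda>i. \<bar>\<alpha> i\<bar> / (x i - x (i - 1)) powr lmin) ` {1..N})"
    and "\<Gamma> \<equiv> Max ((\<lambda>i. \<bar>\<gamma> i\<bar> / (x i - x (i - 1)) powr mmin) ` {1..N})"
    and "\<Theta> \<equiv> Max ((\<lambda>i. \<bar>\<alpha> i\<bar> / (x i - x (i - 1)) powr mmin) ` {1..N})"
  assumes Theta: "\<Theta> > 1"
  shows "(\<Omega> \<noteq> 1 \<and> \<Gamma> \<noteq> 1 \<longrightarrow> (\<exists>\<delta>. 0 < \<delta> \<and> \<delta> \<le> 1 \<and> Lip_on {0..1} \<delta> f1))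
       \<and> (\<Omega> = 1 \<or> \<Gamma> = 1 \<longrightarrow> (\<exists>\<delta>. 0 < \<delta> \<and> \<delta> \<le> 1 \<and>
            (\<lambda>t. modulus {0..1} f1 t) \<in> O[at 0](\<lambda>t. \<bar>t\<bar> powr \<delta> * ln \<bar>t\<bar>)))"
  proof -
  have N1: "N \<ge> 1" using N2 by simp
  have fin: "finite {1..N}" by simp
  have ne: "{1..N} \<noteq> {}" using N1 by simp
  define m0 where "m0 = Min (mu ` {1..N})"
  have m0pos: "0 < m0" unfolding m0_def using mu ne by simp
  have m0le: "m0 \<le> mu i" if "i \<in> {1..N}" for i unfolding m0_def using that by simp
  have "\<forall>i\<in>{1..N}. \<exists>C\<ge>0. \<forall>u\<in>{0..1}. \<forall>v\<in>{0..1}. \<bar>q i u - q i v\<bar> \<le> C * \<bar>u - v\<bar> powr m0"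
    using qLip m0pos m0le by (blast intro: Lip_on_lower)
  from Lip_uniform[OF fin this] obtain Kq where Kq: "0 \<le> Kq"
    "\<forall>i\<in>{1..N}. \<forall>u\<in>{0..1}. \<forall>v\<in>{0..1}. \<bar>q i u - q i v\<bar> \<le> Kq * \<bar>u - v\<bar> powr m0" by blast
  have gam: "\<forall>i\<in>{1..N}. \<bar>\<gamma> i\<bar> < 1" using betagamma by (smt (verit))
  obtain d2 where d2: "0 < d2" "d2 \<le> 1" "Lip_on {0..1} d2 f2"
    using self_affine_holder[OF N1 x0 xN xinc gam m0pos Kq(2) Kq(1) f2c eq2] by blast
  define e1 where "e1 = min d2 (Min (lam ` {1..N}))"
  have e1pos: "0 < e1" unfolding e1_def using lam ne d2 by simp
  have e1le: "e1 \<le> lam i" if "i \<in> {1..N}" for i unfolding e1_def using that by (simp add: min.coboundedI2)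
  have e1d2: "e1 \<le> d2" unfolding e1_def by simp
  have "\<forall>i\<in>{1..N}. \<exists>C\<ge>0. \<forall>u\<in>{0..1}. \<forall>v\<in>{0..1}. \<bar>p i u - p i v\<bar> \<le> C * \<bar>u - v\<bar> powr e1"
    using pLip e1pos e1le by (blast intro: Lip_on_lower)
  from Lip_uniform[OF fin this] obtain Kp where Kp: "0 \<le> Kp"
    "\<forall>i\<in>{1..N}. \<forall>u\<in>{0..1}. \<forall>v\<in>{0..1}. \<bar>p i u - p i v\<bar> \<le> Kp * \<bar>u - v\<bar> powr e1" by blast
  obtain C2 where C2: "0 \<le> C2" "\<forall>u\<in>{0..1}. \<forall>v\<in>{0..1}. \<bar>f2 u - f2 v\<bar> \<le> C2 * \<bar>u - v\<bar> powr e1"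
    using Lip_on_lower[OF d2(3) e1pos e1d2] by blast
  define r where "r i t = \<beta> i * f2 t + p i t" for i t
  have rH: "\<forall>i\<in>{1..N}. \<forall>u\<in>{0..1}. \<forall>v\<in>{0..1}. \<bar>r i u - r i v\<bar> \<le> (C2 + Kp) * \<bar>u - v\<bar> powr e1"
  proof (intro ballI)
    fix i :: nat and u v :: real assume i: "i \<in> {1..N}" and u: "u \<in> {0..1}" and v: "v \<in> {0..1}"
    have b1: "\<bar>\<beta> i\<bar> \<le> 1" using betagamma i by (smt (verit))
    have "r i u - r i v = \<beta> i * (f2 u - f2 v) + (p i u - p i v)" unfolding r_def by (simp add: algebra_simps)
    then have "\<bar>r i u - r i v\<bar> \<le> \<bar>\<beta> i\<bar> * \<bar>f2 u - f2 v\<bar> + \<bar>p i u - p i v\<bar>"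
      using abs_triangle_ineq[of "\<beta> i * (f2 u - f2 v)" "p i u - p i v"] by (simp add: abs_mult)
    moreover have "\<bar>\<beta> i\<bar> * \<bar>f2 u - f2 v\<bar> \<le> 1 * (C2 * \<bar>u - v\<bar> powr e1)"
      using b1 C2(2) u v by (intro mult_mono) auto
    moreover have "\<bar>p i u - p i v\<bar> \<le> Kp * \<bar>u - v\<bar> powr e1" using Kp(2) i u v by blast
    ultimately show "\<bar>r i u - r i v\<bar> \<le> (C2 + Kp) * \<bar>u - v\<bar> powr e1" by (simp add: distrib_right)
  qed
  have K0: "0 \<le> C2 + Kp" using C2 Kp by simp
  have eq1': "\<forall>i\<in>{1..N}. \<forall>t\<in>{0..1}. f1 (x (i - 1) + (x i - x (i - 1)) * t) = \<alpha> i * f1 t + r i t"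
    using eq1 unfolding r_def by (simp add: add.assoc)
  obtain d where d: "0 < d" "d \<le> 1" "Lip_on {0..1} d f1"
    using self_affine_holder[OF N1 x0 xN xinc alpha e1pos rH K0 f1c eq1'] by blast
  obtain C where C: "0 \<le> C" "\<forall>u\<in>{0..1}. \<forall>v\<in>{0..1}. \<bar>f1 u - f1 v\<bar> \<le> C * \<bar>u - v\<bar> powr d"
    using Lip_on_lower[OF d(3) d(1) order_refl] by blast
  have modb: "0 \<le> modulus {0..1} f1 t \<and> modulus {0..1} f1 t \<le> C * \<bar>t\<bar> powr d" for t
  proof -
    define S where "S = {\<bar>f1 u - f1 v\<bar> | u v. u \<in> {0..1} \<and> v \<in> {0..1} \<and> \<bar>u - v\<bar> \<le> \<bar>t\<bar>}"
    have m: "modulus {0..1} f1 t = Sup S" unfolding modulus_def S_def by simp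
    have z: "0 \<in> S" unfolding S_def by (rule CollectI, rule exI[of _ 0], rule exI[of _ 0]) simp
    have ub: "y \<le> C * \<bar>t\<bar> powr d" if yS: "y \<in> S" for y
    proof -
      obtain u v where uv: "y = \<bar>f1 u - f1 v\<bar>" "u \<in> {0..1}" "v \<in> {0..1}" "\<bar>u - v\<bar> \<le> \<bar>t\<bar>"
        using yS unfolding S_def by blast
      have "\<bar>u - v\<bar> powr d \<le> \<bar>t\<bar> powr d" using uv(4) d(1) by (intro powr_mono2) auto
      then have "C * \<bar>u - v\<bar> powr d \<le> C * \<bar>t\<bar> powr d" using C(1) by (rule mult_left_mono)
      then show ?thesis using C(2) uv by fastforce
    qed
    have bdd: "bdd_above S" using ub by (intro bdd_aboveI) blast
    have "0 \<le> Sup S" using z bdd by (rule cSup_upper)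
    moreover have "Sup S \<le> C * \<bar>t\<bar> powr d" using z ub by (intro cSup_least) auto
    ultimately show ?thesis using m by simp
  qed
  have bigo: "(\<lambda>t. modulus {0..1} f1 t) \<in> O[at 0](\<lambda>t. \<bar>t\<bar> powr d * ln \<bar>t\<bar>)"
  proof (rule bigoI[where c = C])
    show "\<forall>\<^sub>F t in at 0. norm (modulus {0..1} f1 t) \<le> C * norm (\<bar>t\<bar> powr d * ln \<bar>t\<bar>)"
      unfolding eventually_at
    proof (intro exI[of _ "exp (-1)"] conjI ballI impI)
      show "0 < exp (- 1::real)" by simp
      fix t :: real assume t: "t \<noteq> 0 \<and> dist t 0 < exp (- 1)"
      then have tp: "0 < \<bar>t\<bar>" and tl: "\<bar>t\<bar> < exp (-1)" by auto
      have "ln \<bar>t\<bar> < ln (exp (-1))" using tp tl by (subst ln_less_cancel_iff) auto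
      then have l1: "1 \<le> \<bar>ln \<bar>t\<bar>\<bar>" by simp
      have "norm (modulus {0..1} f1 t) \<le> C * \<bar>t\<bar> powr d" using modb[of t] by simp
      also have "\<dots> \<le> C * (\<bar>t\<bar> powr d * \<bar>ln \<bar>t\<bar>\<bar>)"
        using C(1) l1 by (intro mult_left_mono) (auto intro: mult_le_cancel_left1[THEN iffD2])
      also have "\<dots> = C * norm (\<bar>t\<bar> powr d * ln \<bar>t\<bar>)" by (simp add: abs_mult)
      finally show "norm (modulus {0..1} f1 t) \<le> C * norm (\<bar>t\<bar> powr d * ln \<bar>t\<bar>)" .
    qed
  qed
  show ?thesis using d bigo by blast
qed

end
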